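(* Let $(H,+,\circ)$ be a commutative multiplicative hyperring with identity $1$, and let $P$ be a nonzero sdf-absorbing $\mathcal{C}$-hyperideal of $H$. Then $\mathrm{rad}(P)=P$.
   Context: A commutative multiplicative hyperring $(H,+,\circ)$ consists of an abelian group $(H,+)$ and a hyperoperation $\circ: H\times H\to P^*(H)$ (nonempty subsets) which is associative ($\bigcup_{a\in y\circ z}x\circ a=\bigcup_{b\in x\circ y}b\circ z$), commutative, satisfies $x\circ(y+z)\subseteq x\circ y+x\circ z$ and $x\circ(-y)=-(x\circ y)=(-x)\circ y$. For subsets $A,B$, $A\circ B=\bigcup_{a\in A,b\in B}a\circ b$ and $A\pm B=\{a\pm b: a\in A,b\in B\}$; $x^n=x\circ\cdots\circ x$ ($n$ factors). An identity $1$ satisfies $x\in x\circ 1$ for all $x$. A hyperideal is a nonempty $P\subseteq H$ with $x-y\in P$ and $r\circ x\subseteq P$ for all $x,y\in P$, $r\in H$. A proper hyperideal $P$ is prime if $x\circ y\subseteq P$ implies $x\in P$ or $y\in P$; $\mathrm{rad}(P)$ is the intersection of all prime hyperideals containing $P$ ($\mathrm{rad}(P)=H$ if there are none). Let $\mathcal{C}=\{c_1\circ\cdots\circ c_n: c_i\in H, n\in\mathbb{N}\}$; a hyperideal $P$ is a $\mathcal{C}$-hyperideal if for every $C\in\mathcal{C}$, $C\cap P\neq\varnothing$ implies $C\subseteq P$. A proper hyperideal $P$ is sdf-absorbing if whenever $0\neq x,y\in H$ and $x^2-y^2\subseteq P$, then $x-y\in P$ or $x+y\in P$. *)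

theory Defs
  imports Main
begin

text \<open>The additive abelian group (H,+) is the ambient type 'a :: ab_group_add
  (so H = UNIV); the hyperoperation is hm :: 'a => 'a => 'a set.\<close>

definition set_mult :: "('a \<Rightarrow> 'a \<Rightarrow> 'a set) \<Rightarrow> 'a set \<Rightarrow> 'a set \<Rightarrow> 'a set" where
  "set_mult hm A B = (\<Union>a\<in>A. \<Union>b\<in>B. hm a b)"

definition set_plus :: "'a::ab_group_add set \<Rightarrow> 'a set \<Rightarrow> 'a set" where
  "set_plus A B = {a + b | a b. a \<in> A \<and> b \<in> B}"

definition set_minus :: "'a::ab_group_add set \<Rightarrow> 'a set \<Rightarrow> 'a set" where
  "set_minus A B = {a - b | a b. a \<in> A \<and> b \<in> B}"

definition comm_mult_hyperring :: "('a::ab_group_add \<Rightarrow> 'a \<Rightarrow> 'a set) \<Rightarrow> bool" where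
  "comm_mult_hyperring hm \<longleftrightarrow>
     (\<forall>x y. hm x y \<noteq> {}) \<and>
     (\<forall>x y z. (\<Union>a\<in>hm y z. hm x a) = (\<Union>b\<in>hm x y. hm b z)) \<and>
     (\<forall>x y. hm x y = hm y x) \<and>
     (\<forall>x y z. hm x (y + z) \<subseteq> set_plus (hm x y) (hm x z)) \<and>
     (\<forall>x y. hm x (- y) = uminus ` (hm x y) \<and> uminus ` (hm x y) = hm (- x) y)"

definition has_identity :: "('a \<Rightarrow> 'a \<Rightarrow> 'a set) \<Rightarrow> bool" where
  "has_identity hm \<longleftrightarrow> (\<exists>one. \<forall>x. x \<in> hm x one)"

fun hprod :: "('a \<Rightarrow> 'a \<Rightarrow> 'a set) \<Rightarrow> 'a list \<Rightarrow> 'a set" where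
  "hprod hm [] = {}"
| "hprod hm [c] = {c}"
| "hprod hm (c # cs) = set_mult hm {c} (hprod hm cs)"

definition hyperideal :: "('a::ab_group_add \<Rightarrow> 'a \<Rightarrow> 'a set) \<Rightarrow> 'a set \<Rightarrow> bool" where
  "hyperideal hm P \<longleftrightarrow> P \<noteq> {} \<and> (\<forall>x\<in>P. \<forall>y\<in>P. x - y \<in> P) \<and> (\<forall>r. \<forall>x\<in>P. hm r x \<subseteq> P)"

definition prime_hyperideal :: "('a::ab_group_add \<Rightarrow> 'a \<Rightarrow> 'a set) \<Rightarrow> 'a set \<Rightarrow> bool" where
  "prime_hyperideal hm P \<longleftrightarrow> hyperideal hm P \<and> P \<noteq> UNIV \<and>
     (\<forall>x y. hm x y \<subseteq> P \<longrightarrow> x \<in> P \<or> y \<in> P)"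

text \<open>Intersection of all primes containing P; the empty intersection is UNIV = H.\<close>
definition hrad :: "('a::ab_group_add \<Rightarrow> 'a \<Rightarrow> 'a set) \<Rightarrow> 'a set \<Rightarrow> 'a set" where
  "hrad hm P = \<Inter> {Q. prime_hyperideal hm Q \<and> P \<subseteq> Q}"

definition C_class :: "('a \<Rightarrow> 'a \<Rightarrow> 'a set) \<Rightarrow> 'a set set" where
  "C_class hm = {hprod hm cs | cs. cs \<noteq> []}"

definition C_hyperideal :: "('a::ab_group_add \<Rightarrow> 'a \<Rightarrow> 'a set) \<Rightarrow> 'a set \<Rightarrow> bool" where
  "C_hyperideal hm P \<longleftrightarrow> hyperideal hm P \<and> (\<forall>C\<in>C_class hm. C \<inter> P \<noteq> {} \<longrightarrow> C \<subseteq> P)"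

definition sdf_absorbing :: "('a::ab_group_add \<Rightarrow> 'a \<Rightarrow> 'a set) \<Rightarrow> 'a set \<Rightarrow> bool" where
  "sdf_absorbing hm P \<longleftrightarrow> hyperideal hm P \<and> P \<noteq> UNIV \<and>
     (\<forall>x y. x \<noteq> 0 \<and> y \<noteq> 0 \<and> set_minus (hprod hm [x, x]) (hprod hm [y, y]) \<subseteq> P
        \<longrightarrow> x - y \<in> P \<or> x + y \<in> P)"

end

theory Submission
  imports Defs
begin

lemma hr_ax: assumes "comm_mult_hyperring hm" shows "(\<Union>a\<in>hm y z. hm x a) = (\<Union>b\<in>hm x y. hm b z)"
proof -
  have "\<forall>x y z. (\<Union>a\<in>hm y z. hm x a) = (\<Union>b\<in>hm x y. hm b z)" using assms unfolding comm_mult_hyperring_def by (elim conjE) assumption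
  then show ?thesis by (metis (no_types))
qed

lemma hr_comm: assumes "comm_mult_hyperring hm" shows "hm x y = hm y x"
proof -
  have "\<forall>x y. hm x y = hm y x" using assms unfolding comm_mult_hyperring_def by (elim conjE) assumption
  then show ?thesis by (metis (no_types))
qed

lemma hr_ne: assumes "comm_mult_hyperring hm" shows "hm x y \<noteq> {}"
proof -
  have "\<forall>x y. hm x y \<noteq> {}" using assms unfolding comm_mult_hyperring_def by (elim conjE) assumption
  then show ?thesis by (metis (no_types))
qed

lemma hr_dist: assumes "comm_mult_hyperring hm" shows "hm x (y + z) \<subseteq> set_plus (hm x y) (hm x z)"
proof -
  have "\<forall>x y z. hm x (y + z) \<subseteq> set_plus (hm x y) (hm x z)" using assms unfolding comm_mult_hyperring_def by (elim conjE) assumption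
  then show ?thesis by (metis (no_types))
qed

lemma hr_neg: assumes "comm_mult_hyperring hm" shows "hm x (- y) = uminus ` (hm x y)"
proof -
  have "\<forall>x y. hm x (- y) = uminus ` (hm x y) \<and> uminus ` (hm x y) = hm (- x) y" using assms unfolding comm_mult_hyperring_def by (elim conjE) assumption
  then show ?thesis by (metis (no_types))
qed

lemma hi_add:
  assumes "hyperideal hm Q" "a \<in> Q" "b \<in> Q" shows "a + b \<in> Q" "- a \<in> Q" "0 \<in> Q"
proof -
  have z: "0 \<in> Q" using assms unfolding hyperideal_def by (metis right_minus_eq)
  have n: "- a \<in> Q" "- b \<in> Q" using assms z unfolding hyperideal_def by (metis diff_0)+
  show "a + b \<in> Q" using assms n unfolding hyperideal_def by (metis diff_minus_eq_add)
  show "- a \<in> Q" by (rule n)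
  show "0 \<in> Q" by (rule z)
qed

lemma hi_ne: "hyperideal hm Q \<Longrightarrow> Q \<noteq> {}"
  unfolding hyperideal_def by (elim conjE)

lemma hi_sub: "hyperideal hm Q \<Longrightarrow> x \<in> Q \<Longrightarrow> y \<in> Q \<Longrightarrow> x - y \<in> Q"
  unfolding hyperideal_def by (elim conjE) blast

lemma Chi: "C_hyperideal hm P \<Longrightarrow> C \<in> C_class hm \<Longrightarrow> C \<inter> P \<noteq> {} \<Longrightarrow> C \<subseteq> P"
  unfolding C_hyperideal_def by (elim conjE) (erule ballE, erule mp, assumption, erule notE, assumption)

lemma hi_mult: "hyperideal hm Q \<Longrightarrow> x \<in> Q \<Longrightarrow> hm r x \<subseteq> Q"
  unfolding hyperideal_def by blast

lemma hi_mult2: "comm_mult_hyperring hm \<Longrightarrow> hyperideal hm Q \<Longrightarrow> x \<in> Q \<Longrightarrow> hm x r \<subseteq> Q"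
  using hi_mult hr_comm by metis

lemma sm_mem: "t \<in> set_mult hm A B \<longleftrightarrow> (\<exists>a\<in>A. \<exists>b\<in>B. t \<in> hm a b)"
  unfolding set_mult_def by blast

lemma sm_assoc:
  assumes "comm_mult_hyperring hm"
  shows "set_mult hm A (set_mult hm B C) = set_mult hm (set_mult hm A B) C"
proof -
  have ax: "\<And>x y z. (\<Union>a\<in>hm y z. hm x a) = (\<Union>b\<in>hm x y. hm b z)"
    using hr_ax[OF assms] .
  show ?thesis
  proof (intro equalityI subsetI)
    fix t assume "t \<in> set_mult hm A (set_mult hm B C)"
    then obtain a b c d where abc: "a \<in> A" "b \<in> B" "c \<in> C" and "d \<in> hm b c" "t \<in> hm a d"
      using sm_mem by metis
    then have "t \<in> (\<Union>d\<in>hm b c. hm a d)" by blast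
    then have "t \<in> (\<Union>e\<in>hm a b. hm e c)" by (simp only: ax)
    then obtain e where "e \<in> hm a b" "t \<in> hm e c" by blast
    then show "t \<in> set_mult hm (set_mult hm A B) C" using abc sm_mem by metis
  next
    fix t assume "t \<in> set_mult hm (set_mult hm A B) C"
    then obtain a b c e where abc: "a \<in> A" "b \<in> B" "c \<in> C" and "e \<in> hm a b" "t \<in> hm e c"
      using sm_mem by metis
    then have "t \<in> (\<Union>e\<in>hm a b. hm e c)" by blast
    then have "t \<in> (\<Union>d\<in>hm b c. hm a d)" by (simp only: ax)
    then obtain d where "d \<in> hm b c" "t \<in> hm a d" by blast
    then show "t \<in> set_mult hm A (set_mult hm B C)" using abc sm_mem by metis
  qed
qed

definition pw where "pw hm x n = hprod hm (replicate n x)"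

lemma pw1: "pw hm x (Suc 0) = {x}" by (simp add: pw_def)
lemma pwS: "pw hm x (Suc (Suc k)) = set_mult hm {x} (pw hm x (Suc k))" by (simp add: pw_def)

lemma pw_add:
  assumes "comm_mult_hyperring hm"
  shows "set_mult hm (pw hm x (Suc a)) (pw hm x (Suc b)) = pw hm x (Suc a + Suc b)"
proof (induction a)
  case 0 then show ?case by (simp add: pw1 pwS)
next
  case (Suc a)
  have "set_mult hm (pw hm x (Suc (Suc a))) (pw hm x (Suc b))
      = set_mult hm {x} (set_mult hm (pw hm x (Suc a)) (pw hm x (Suc b)))"
    by (simp add: pwS sm_assoc[OF assms])
  also have "\<dots> = pw hm x (Suc (Suc a + Suc b))" using Suc by (simp add: pwS)
  finally show ?case by simp
qed

lemma pw_C: "n \<ge> 1 \<Longrightarrow> pw hm x n \<in> C_class hm"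
  unfolding C_class_def pw_def by (cases n) auto

lemma sm_ideal:
  assumes "comm_mult_hyperring hm" "hyperideal hm Q" "B \<subseteq> Q"
  shows "set_mult hm A B \<subseteq> Q" "set_mult hm B A \<subseteq> Q"
  using assms hi_mult hi_mult2 unfolding set_mult_def by fast+


lemma sq_in:
  assumes H: "comm_mult_hyperring hm" and sdf: "sdf_absorbing hm P"
    and iP: "i \<in> P" and i0: "i \<noteq> 0" and xx: "hm x x \<subseteq> P"
  shows "x \<in> P"
proof -
  have I: "hyperideal hm P" using sdf unfolding sdf_absorbing_def by blast
  have comm: "\<And>u v. hm u v = hm v u" using H by (rule hr_comm)
  have dist: "\<And>u v w. hm u (v + w) \<subseteq> set_plus (hm u v) (hm u w)"
    using H by (rule hr_dist)
  show ?thesis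
  proof (cases "x + i = 0")
    case True
    then have "x = - i" by (simp add: add_eq_0_iff)
    then show ?thesis using hi_add(2)[OF I iP iP] by simp
  next
    case False
    define a where "a = x + i"
    have xi: "hm x i \<subseteq> P" using hi_mult[OF I iP] by blast
    have "hm x a \<subseteq> P"
    proof
      fix t assume "t \<in> hm x a"
      then have "t \<in> set_plus (hm x x) (hm x i)" using dist[of x x i] a_def by blast
      then show "t \<in> P" using xx xi hi_add(1)[OF I] unfolding set_plus_def by blast
    qed
    then have ax: "hm a x \<subseteq> P" using comm by metis
    have ai: "hm a i \<subseteq> P" using hi_mult[OF I iP] by blast
    have aa: "hm a a \<subseteq> P"
    proof
      fix t assume "t \<in> hm a a"
      then have "t \<in> set_plus (hm a x) (hm a i)" using dist[of a x i] a_def by blast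
      then show "t \<in> P" using ax ai hi_add(1)[OF I] unfolding set_plus_def by blast
    qed
    have ii: "hm i i \<subseteq> P" using hi_mult[OF I iP] by blast
    have "set_minus (hprod hm [a, a]) (hprod hm [i, i]) \<subseteq> P"
    proof
      fix t assume "t \<in> set_minus (hprod hm [a, a]) (hprod hm [i, i])"
      then obtain u v where "u \<in> hm a a" "v \<in> hm i i" "t = u - v"
        by (auto simp: set_minus_def set_mult_def)
      then show "t \<in> P" using aa ii I unfolding hyperideal_def by blast
    qed
    then have "a - i \<in> P \<or> a + i \<in> P" using sdf False i0 a_def unfolding sdf_absorbing_def by blast
    then show ?thesis
    proof
      assume "a - i \<in> P" then show ?thesis by (simp add: a_def)
    next
      assume "a + i \<in> P"
      then have "(a + i) - i - i \<in> P" using iP I unfolding hyperideal_def by blast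
      then show ?thesis by (simp add: a_def)
    qed
  qed
qed

lemma descent:
  assumes H: "comm_mult_hyperring hm" and sdf: "sdf_absorbing hm P"
    and iP: "i \<in> P" and i0: "i \<noteq> 0"
  shows "pw hm x (Suc n) \<subseteq> P \<Longrightarrow> x \<in> P"
proof (induction n)
  case 0 then show ?case by (simp add: pw1)
next
  case (Suc n)
  have I: "hyperideal hm P" using sdf unfolding sdf_absorbing_def by blast
  have "pw hm x (Suc n) \<subseteq> P"
  proof
    fix y assume y: "y \<in> pw hm x (Suc n)"
    have "hm y y \<subseteq> set_mult hm (pw hm x (Suc n)) (pw hm x (Suc n))"
      using y unfolding set_mult_def by blast
    also have "\<dots> = pw hm x (Suc n + Suc n)" by (rule pw_add[OF H])
    also have "\<dots> \<subseteq> P"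
    proof (cases n)
      case 0 then show ?thesis using Suc.prems by simp
    next
      case (Suc m)
      have "pw hm x (Suc n + Suc n) = set_mult hm (pw hm x (Suc m)) (pw hm x (Suc (Suc n)))"
        using pw_add[OF H, of x m "Suc n"] Suc by simp
      also have "\<dots> \<subseteq> P" using sm_ideal(1)[OF H I \<open>pw hm x (Suc (Suc n)) \<subseteq> P\<close>] .
      finally show ?thesis .
    qed
    finally show "y \<in> P" using sq_in[OF H sdf iP i0] by blast
  qed
  then show ?case using Suc.IH by blast
qed

lemma colon_ideal:
  assumes H: "comm_mult_hyperring hm" and I: "hyperideal hm Q"
  shows "hyperideal hm {r. hm r b \<subseteq> Q}"
proof -
  have comm: "\<And>u v. hm u v = hm v u" using H by (rule hr_comm)
  have dist: "\<And>u v w. hm u (v + w) \<subseteq> set_plus (hm u v) (hm u w)"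
    using H by (rule hr_dist)
  have neg: "\<And>u v. hm u (- v) = uminus ` (hm u v)"
    using H by (rule hr_neg)
  have ax: "\<And>x y z. (\<Union>a\<in>hm y z. hm x a) = (\<Union>b\<in>hm x y. hm b z)"
    using H by (rule hr_ax)
  obtain q where q: "q \<in> Q" using I unfolding hyperideal_def by blast
  have ne: "{r. hm r b \<subseteq> Q} \<noteq> {}" using hi_mult2[OF H I q] by blast
  have sub: "r1 - r2 \<in> {r. hm r b \<subseteq> Q}" if "hm r1 b \<subseteq> Q" "hm r2 b \<subseteq> Q" for r1 r2
  proof -
    have "hm b (r1 + - r2) \<subseteq> Q"
    proof
      fix t assume "t \<in> hm b (r1 + - r2)"
      then have "t \<in> set_plus (hm b r1) (hm b (- r2))" using dist by blast
      then have "t \<in> set_plus (hm b r1) (uminus ` hm b r2)" by (simp only: neg)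
      then obtain u v where "u \<in> hm b r1" "v \<in> hm b r2" "t = u + - v"
        unfolding set_plus_def by blast
      moreover have "u \<in> Q" using \<open>u \<in> hm b r1\<close> that(1) comm[of b r1] by blast
      moreover have "v \<in> Q" using \<open>v \<in> hm b r2\<close> that(2) comm[of b r2] by blast
      ultimately show "t \<in> Q" using hi_add[OF I] by metis
    qed
    then have "hm (r1 - r2) b \<subseteq> Q" using comm[of b "r1 - r2"] by simp
    then show ?thesis by simp
  qed
  have mul: "hm s r \<subseteq> {r. hm r b \<subseteq> Q}" if "hm r b \<subseteq> Q" for s r
  proof
    fix t assume t: "t \<in> hm s r"
    have "hm t b \<subseteq> (\<Union>e\<in>hm s r. hm e b)" using t by blast
    also have "\<dots> = (\<Union>c\<in>hm r b. hm s c)" by (rule ax[symmetric])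
    also have "\<dots> \<subseteq> Q" using that hi_mult[OF I] by blast
    finally show "t \<in> {r. hm r b \<subseteq> Q}" by simp
  qed
  show ?thesis unfolding hyperideal_def
  proof (intro conjI ballI allI)
    show "{r. hm r b \<subseteq> Q} \<noteq> {}" by (rule ne)
  next
    fix x y assume "x \<in> {r. hm r b \<subseteq> Q}" "y \<in> {r. hm r b \<subseteq> Q}"
    then show "x - y \<in> {r. hm r b \<subseteq> Q}" using sub by simp
  next
    fix r x assume "x \<in> {r. hm r b \<subseteq> Q}"
    then show "hm r x \<subseteq> {r. hm r b \<subseteq> Q}" using mul by simp
  qed
qed


theorem mainTheorem1:
  fixes hm :: "'a::ab_group_add \<Rightarrow> 'a \<Rightarrow> 'a set" and P :: "'a set"
  assumes "comm_mult_hyperring hm"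
    and "has_identity hm"
    and "P \<noteq> {0}"
    and "sdf_absorbing hm P"
    and "C_hyperideal hm P"
  shows "hrad hm P = P"
proof
  show "P \<subseteq> hrad hm P" unfolding hrad_def by blast
next
  note H = assms(1) and sdf = assms(4)
  have I: "hyperideal hm P" using sdf unfolding sdf_absorbing_def by blast
  have comm: "\<And>u v. hm u v = hm v u" using H by (rule hr_comm)
  have nonemp: "\<And>u v. hm u v \<noteq> {}" using H by (rule hr_ne)
  obtain i where iP: "i \<in> P" and i0: "i \<noteq> 0"
    using hi_ne[OF I] assms(3) by blast
  show "hrad hm P \<subseteq> P"
  proof
    fix x assume xr: "x \<in> hrad hm P"
    show "x \<in> P"
    proof (rule ccontr)
      assume xP: "x \<notin> P"
      define S where "S = (\<Union>n. pw hm x (Suc n))"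
      have xS: "x \<in> S" unfolding S_def using pw1[of hm x] by blast
      have PS: "P \<inter> S = {}"
      proof (rule ccontr)
        assume "P \<inter> S \<noteq> {}"
        then obtain n where "P \<inter> pw hm x (Suc n) \<noteq> {}" unfolding S_def by blast
        then have "pw hm x (Suc n) \<subseteq> P" using Chi[OF assms(5) pw_C[of "Suc n" hm x]]
          by (simp add: Int_commute)
        then show False using descent[OF H sdf iP i0] xP by blast
      qed
      define F where "F = {Q. hyperideal hm Q \<and> P \<subseteq> Q \<and> Q \<inter> S = {}}"
      have "\<exists>M\<in>F. \<forall>X\<in>F. M \<subseteq> X \<longrightarrow> X = M"
      proof (rule subset_Zorn_nonempty)
        have "P \<in> F" using I PS unfolding F_def by simp
        then show "F \<noteq> {}" by blast
      next
        fix C assume Cne: "C \<noteq> {}" and ch: "subset.chain F C"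
        have CF: "C \<subseteq> F" and cmp: "\<And>A B. A \<in> C \<Longrightarrow> B \<in> C \<Longrightarrow> A \<subseteq> B \<or> B \<subseteq> A"
          using ch unfolding subset.chain_def by blast+
        have "hyperideal hm (\<Union>C)" unfolding hyperideal_def
        proof (intro conjI ballI allI subsetI)
          obtain A where "A \<in> C" using Cne by blast
          then have "A \<noteq> {}" using CF hi_ne unfolding F_def by blast
          then show "\<Union>C \<noteq> {}" using \<open>A \<in> C\<close> by blast
        next
          fix u v assume "u \<in> \<Union>C" "v \<in> \<Union>C"
          then obtain A B where "A \<in> C" "B \<in> C" "u \<in> A" "v \<in> B" by blast
          have "hyperideal hm A" "hyperideal hm B" using \<open>A \<in> C\<close> \<open>B \<in> C\<close> CF unfolding F_def by blast+
          then have "u - v \<in> A \<or> u - v \<in> B" using cmp[of A B] \<open>A \<in> C\<close> \<open>B \<in> C\<close> \<open>u \<in> A\<close> \<open>v \<in> B\<close> hi_sub by blast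
          then show "u - v \<in> \<Union>C" using \<open>A \<in> C\<close> \<open>B \<in> C\<close> by blast
        next
          fix r u t assume "u \<in> \<Union>C" "t \<in> hm r u"
          then obtain A where "A \<in> C" "u \<in> A" by blast
          have "hyperideal hm A" using \<open>A \<in> C\<close> CF unfolding F_def by blast
          then have "t \<in> A" using hi_mult \<open>u \<in> A\<close> \<open>t \<in> hm r u\<close> by blast
          then show "t \<in> \<Union>C" using \<open>A \<in> C\<close> by blast
        qed
        then show "\<Union>C \<in> F" using Cne CF unfolding F_def by blast
      qed
      then obtain M where MF: "M \<in> F" and Mmax: "\<And>X. X \<in> F \<Longrightarrow> M \<subseteq> X \<Longrightarrow> X = M" by blast
      have MI: "hyperideal hm M" and PM: "P \<subseteq> M" and MS: "M \<inter> S = {}" using MF unfolding F_def by blast+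
      have meet: "\<exists>n. \<exists>u \<in> pw hm x (Suc n). hm u c \<subseteq> M" if cM: "c \<notin> M" and ex: "\<exists>a. a \<notin> M \<and> hm a c \<subseteq> M" for c
      proof -
        define K where "K = {r. hm r c \<subseteq> M}"
        have KI: "hyperideal hm K" unfolding K_def by (rule colon_ideal[OF H MI])
        have MK: "M \<subseteq> K" unfolding K_def using hi_mult2[OF H MI] by blast
        obtain a where "a \<notin> M" "a \<in> K" using ex unfolding K_def by blast
        have "K \<inter> S \<noteq> {}"
        proof
          assume "K \<inter> S = {}"
          then have "K \<in> F" using KI MK PM unfolding F_def by blast
          then have "K = M" using Mmax MK by blast
          then show False using \<open>a \<notin> M\<close> \<open>a \<in> K\<close> by blast
        qed
        then show ?thesis unfolding K_def S_def by blast
      qed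
      have prime: "prime_hyperideal hm M" unfolding prime_hyperideal_def
      proof (intro conjI allI impI)
        show "hyperideal hm M" by (rule MI)
        show "M \<noteq> UNIV" using xS MS by blast
      next
        fix a b assume ab: "hm a b \<subseteq> M"
        show "a \<in> M \<or> b \<in> M"
        proof (rule ccontr)
          assume "\<not> (a \<in> M \<or> b \<in> M)"
          then have aM: "a \<notin> M" and bM: "b \<notin> M" by blast+
          obtain n u where u: "u \<in> pw hm x (Suc n)" and ub: "hm u b \<subseteq> M"
            using meet[of b] aM bM ab by blast
          have uM: "u \<notin> M" using u MS unfolding S_def by blast
          have "hm b u \<subseteq> M" using ub comm by metis
          then obtain m v where v: "v \<in> pw hm x (Suc m)" and vu: "hm v u \<subseteq> M"
            using meet[of u] uM bM by blast
          have "hm v u \<subseteq> set_mult hm (pw hm x (Suc m)) (pw hm x (Suc n))"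
            using u v unfolding set_mult_def by blast
          also have "\<dots> = pw hm x (Suc (m + Suc n))" using pw_add[OF H] by simp
          also have "\<dots> \<subseteq> S" unfolding S_def by blast
          finally show False using vu MS nonemp[of v u] by blast
        qed
      qed
      have "x \<notin> M" using xS MS by blast
      then show False using xr prime PM unfolding hrad_def by blast
    qed
  qed
qed

end
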